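(* Let $k\ge1$ and $n$ be integers and let $a\to b$ be an edge of $G(n,k)$. Then its length $(b-a)_{k+1}$ equals $(n_k-n_{k+1}+2)_{k+1}$ if $b\le n_k-1$, and equals $(n_k-n_{k+1}+1)_{k+1}$ if $b\ge n_k$.
   Context: For an integer $\ell$, $\ell_k$ and $\ell_{k+1}$ (also written $(\ell)_k,(\ell)_{k+1}$) denote the least nonnegative residues of $\ell$ modulo $k$ and $k+1$. $G(n,k)$ is the directed graph on vertices $0,1,\dots,k$ whose edges are exactly the $k$ edges $(i+n-2)_{k+1}\to(i+n-1)_k$, $1\le i\le k$. *)

theory Defs
  imports Main
begin

text \<open>Residues are least nonnegative residues; Isabelle's int mod with positive
  modulus gives exactly these.\<close>
definition G_edges :: "int \<Rightarrow> int \<Rightarrow> (int \<times> int) set" where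
  "G_edges n k = {((i + n - 2) mod (k + 1), (i + n - 1) mod k) | i. 1 \<le> i \<and> i \<le> k}"

end

theory Submission
  imports Defs
begin

theorem lemma7p4:
  fixes n k a b :: int
  assumes "k \<ge> 1"
    and "(a, b) \<in> G_edges n k"
  shows "(b \<le> n mod k - 1 \<longrightarrow> (b - a) mod (k + 1) = (n mod k - n mod (k + 1) + 2) mod (k + 1))
       \<and> (b \<ge> n mod k \<longrightarrow> (b - a) mod (k + 1) = (n mod k - n mod (k + 1) + 1) mod (k + 1))"
proof -
  obtain i where i: "1 \<le> i" "i \<le> k" and a: "a = (i + n - 2) mod (k + 1)"
    and b: "b = (i + n - 1) mod k"
    using assms(2) unfolding G_edges_def by auto
  define r where "r = n mod k"
  define u where "u = n div k"
  define s where "s = n mod (k+1)"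
  define v where "v = n div (k+1)"
  define w where "w = (i + n - 2) div (k + 1)"
  have n1: "n = k*u + r" unfolding r_def u_def by simp
  have n2: "n = (k+1)*v + s" unfolding s_def v_def by simp
  have r: "0 \<le> r" "r < k" unfolding r_def using assms(1) by auto
  have aw: "a = i + n - 2 - (k+1)*w" unfolding a w_def by (simp add: minus_div_mult_eq_mod [symmetric] algebra_simps)
  have bt: "b = (i - 1 + r + k*u) mod k" unfolding b using n1 by (simp add: algebra_simps)
  also have "\<dots> = (i - 1 + r) mod k" by simp
  finally have bt: "b = (i - 1 + r) mod k" .
  show ?thesis
  proof (cases "i - 1 + r < k")
    case True
    then have "b = i - 1 + r" using bt i r by simp
    then have "b - a = r - s + 1 + (k+1)*(w - v)" using aw n2 by (simp add: algebra_simps)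
    then have "(b - a) mod (k+1) = (r - s + 1) mod (k+1)" by simp
    moreover have "\<not> b \<le> r - 1" using \<open>b = i - 1 + r\<close> i by simp
    ultimately show ?thesis unfolding r_def s_def by auto
  next
    case False
    have "b = ((i - 1 + r - k) + k) mod k" using bt by simp
    also have "\<dots> = (i - 1 + r - k) mod k" by (simp only: mod_add_self2)
    also have "\<dots> = i - 1 + r - k" using False i r by (intro mod_pos_pos_trivial) auto
    finally have "b = i - 1 + r - k" .
    then have "b - a = r - s + 2 + (k+1)*(w - v - 1)" using aw n2 by (simp add: algebra_simps)
    then have "(b - a) mod (k+1) = (r - s + 2) mod (k+1)" by simp
    moreover have "b \<le> r - 1" using \<open>b = i - 1 + r - k\<close> i by simp
    ultimately show ?thesis unfolding r_def s_def by auto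
  qed
qed

end
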